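(* For all $\theta,\theta_0>0$ and every probability distribution $F$ on $(0,\infty)$, \[ \| p_{\theta,F}-p_{\theta_0,F}\|_1 \le \frac{2|\theta-\theta_0|}{\theta_0}. \]
   Context: For $\theta>0$ and a finite measure $F$ on $(0,\infty)$, the exponential frailty density on $(0,\infty)^2$ is $p_{\theta,F}(x,y)=\int z^2\theta e^{-z(x+\theta y)}\,dF(z)$ (the density of $(X,Y)$ when, given $Z\sim F$, $X$ and $Y$ are independent exponentials with rates $Z$ and $\theta Z$). $\|\cdot\|_1$ denotes the $L^1$ norm with respect to Lebesgue measure on $(0,\infty)^2$. *)

theory Defs
  imports "HOL-Probability.Probability"
begin

definition frailty_density :: "real \<Rightarrow> real measure \<Rightarrow> real \<Rightarrow> real \<Rightarrow> real" where
  "frailty_density \<theta> F x y = (\<integral>z. z\<^sup>2 * \<theta> * exp (- z * (x + \<theta> * y)) \<partial>F)"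

definition L1_dist_quadrant :: "(real \<Rightarrow> real \<Rightarrow> real) \<Rightarrow> (real \<Rightarrow> real \<Rightarrow> real) \<Rightarrow> ennreal" where
  "L1_dist_quadrant f g =
     (\<integral>\<^sup>+ xy. indicator ({0<..} \<times> {0<..}) xy * ennreal \<bar>f (fst xy) (snd xy) - g (fst xy) (snd xy)\<bar>
        \<partial>(lborel :: (real \<times> real) measure))"

end

theory Submission
  imports Defs
begin

lemma exp1d:
  fixes c :: real assumes c: "c > 0"
  shows "(\<integral>\<^sup>+y. indicator {0<..} y * ennreal (c * exp (- c * y)) \<partial>lborel) = 1"
proof -
  interpret prob_space "density lborel (exponential_density c)"
    using prob_space_exponential_density[OF c] .
  have "emeasure (density lborel (exponential_density c)) UNIV = 1"
    using emeasure_space_1 by simp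
  hence "(\<integral>\<^sup>+y. ennreal (exponential_density c y) \<partial>lborel) = 1"
    by (simp add: emeasure_density)
  moreover have "(\<integral>\<^sup>+y. indicator {0<..} y * ennreal (c * exp (- c * y)) \<partial>lborel)
     = (\<integral>\<^sup>+y. ennreal (exponential_density c y) \<partial>lborel)"
    apply (rule nn_integral_cong_AE)
    using AE_lborel_singleton[of 0]
    by eventually_elim (auto simp: exponential_density_def indicator_def mult.commute)
  ultimately show ?thesis by simp
qed

lemma exp2d:
  fixes z \<theta> :: real assumes z: "z > 0" and th: "\<theta> > 0"
  shows "(\<integral>\<^sup>+xy. indicator ({0<..} \<times> {0<..}) xy *
      ennreal (z\<^sup>2 * \<theta> * exp (- z * (fst xy + \<theta> * snd xy))) \<partial>(lborel :: (real \<times> real) measure)) = 1"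
proof -
  have eq: "indicator ({0<..} \<times> {0<..}) (x,y) *
      ennreal (z\<^sup>2 * \<theta> * exp (- z * (x + \<theta> * y)))
    = (indicator {0<..} x * ennreal (z * exp (- z * x))) *
      (indicator {0<..} y * ennreal ((z*\<theta>) * exp (- (z*\<theta>) * y)))" for x y :: real
  proof -
    have "z\<^sup>2 * \<theta> * exp (- z * (x + \<theta> * y)) = (z * exp (- z * x)) * ((z*\<theta>) * exp (- (z*\<theta>) * y))"
      by (simp add: power2_eq_square algebra_simps flip: exp_add)
    thus ?thesis using z th
      by (auto simp: indicator_def ennreal_mult[symmetric] mult_nonneg_nonneg)
  qed
  define f where "f = (\<lambda>xy::real\<times>real. indicator ({0<..} \<times> {0<..}) xy *
      ennreal (z\<^sup>2 * \<theta> * exp (- z * (fst xy + \<theta> * snd xy))))"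
  have m: "f \<in> borel_measurable (lborel \<Otimes>\<^sub>M lborel)"
    unfolding f_def by measurable
  have "integral\<^sup>N (lborel :: (real \<times> real) measure) f = (\<integral>\<^sup>+x. \<integral>\<^sup>+y. f (x,y) \<partial>lborel \<partial>lborel)"
    using sigma_finite_measure.nn_integral_fst[OF sigma_finite_lborel m]
    by (simp only: lborel_prod)
  hence "(\<integral>\<^sup>+xy. indicator ({0<..} \<times> {0<..}) xy *
      ennreal (z\<^sup>2 * \<theta> * exp (- z * (fst xy + \<theta> * snd xy))) \<partial>(lborel :: (real \<times> real) measure))
    = (\<integral>\<^sup>+x. \<integral>\<^sup>+y. indicator ({0<..} \<times> {0<..}) (x,y) *
      ennreal (z\<^sup>2 * \<theta> * exp (- z * (x + \<theta> * y))) \<partial>lborel \<partial>lborel)"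
    unfolding f_def by simp
  also have "\<dots> = (\<integral>\<^sup>+x. (indicator {0<..} x * ennreal (z * exp (- z * x))) *
      (\<integral>\<^sup>+y. indicator {0<..} y * ennreal ((z*\<theta>) * exp (- (z*\<theta>) * y)) \<partial>lborel) \<partial>lborel)"
    unfolding eq by (subst nn_integral_cmult) auto
  also have "\<dots> = 1" using exp1d[of "z*\<theta>"] exp1d[of z] z th by simp
  finally show ?thesis .
qed

lemma meas_g:
  fixes F :: "real measure" assumes sF: "sets F = sets borel"
  shows "(\<lambda>(xy,z). z\<^sup>2 * \<theta> * exp (- z * (fst xy + \<theta> * snd xy)))
     \<in> borel_measurable ((lborel::(real\<times>real) measure) \<Otimes>\<^sub>M F)"
    and "(\<lambda>(xy,z). indicator ({0<..} \<times> {0<..}) xy * ennreal (z\<^sup>2 * \<theta> * exp (- z * (fst xy + \<theta> * snd xy))))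
     \<in> borel_measurable ((lborel::(real\<times>real) measure) \<Otimes>\<^sub>M F)"
proof -
  have s: "sets ((lborel::(real\<times>real) measure) \<Otimes>\<^sub>M F) = sets (((lborel::real measure) \<Otimes>\<^sub>M (lborel::real measure)) \<Otimes>\<^sub>M borel)"
    apply (rule sets_pair_measure_cong) apply (simp only: lborel_prod) apply (simp add: sF) done
  show "(\<lambda>(xy,z). z\<^sup>2 * \<theta> * exp (- z * (fst xy + \<theta> * snd xy)))
     \<in> borel_measurable ((lborel::(real\<times>real) measure) \<Otimes>\<^sub>M F)"
    unfolding measurable_cong_sets[OF s refl] by measurable
  show "(\<lambda>(xy,z). indicator ({0<..} \<times> {0<..}) xy * ennreal (z\<^sup>2 * \<theta> * exp (- z * (fst xy + \<theta> * snd xy))))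
     \<in> borel_measurable ((lborel::(real\<times>real) measure) \<Otimes>\<^sub>M F)"
    unfolding measurable_cong_sets[OF s refl] by measurable
qed

lemma exp_bound:
  fixes z c :: real assumes z: "z > 0" and c: "c > 0"
  shows "z\<^sup>2 * exp (- z * c) \<le> 4 / c\<^sup>2"
proof -
  have "z * c / 2 \<le> exp (z * c / 2)" using exp_ge_add_one_self[of "z*c/2"] by linarith
  hence "(z * c / 2)\<^sup>2 \<le> (exp (z * c / 2))\<^sup>2" using z c by (intro power_mono) auto
  also have "(exp (z * c / 2))\<^sup>2 = exp (z * c)" by (simp add: power2_eq_square flip: exp_add)
  finally have h: "(z * c)\<^sup>2 / 4 \<le> exp (z * c)" by (simp add: power_divide)
  have "z\<^sup>2 * exp (- z * c) = z\<^sup>2 / exp (z * c)" by (simp add: exp_minus field_simps)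
  also have "\<dots> \<le> z\<^sup>2 / ((z * c)\<^sup>2 / 4)"
    using h z c by (intro divide_left_mono) auto
  also have "\<dots> = 4 / c\<^sup>2" using z c by (simp add: field_simps power2_eq_square)
  finally show ?thesis .
qed

lemma AE_pos:
  fixes F :: "real measure" assumes sF: "sets F = sets borel" and F0: "emeasure F {..0} = 0"
  shows "AE z in F. z > 0"
  by (rule AE_I[of _ _ "{..0}"]) (auto simp: F0 sF)

lemma integrable_g:
  fixes F :: "real measure" assumes "prob_space F" and sF: "sets F = sets borel" and F0: "emeasure F {..0} = 0"
    and th: "\<theta> > 0" and x: "x > 0" and y: "y > 0"
  shows "integrable F (\<lambda>z. z\<^sup>2 * \<theta> * exp (- z * (x + \<theta> * y)))"
proof -
  interpret prob_space F by fact
  have c: "x + \<theta> * y > 0" using x y th by (simp add: add_pos_pos)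
  show ?thesis
  proof (rule integrable_const_bound[where B="\<theta> * (4 / (x + \<theta> * y)\<^sup>2)"])
    show "AE z in F. norm (z\<^sup>2 * \<theta> * exp (- z * (x + \<theta> * y))) \<le> \<theta> * (4 / (x + \<theta> * y)\<^sup>2)"
      using AE_pos[OF sF F0]
    proof eventually_elim
      case (elim z)
      have "z\<^sup>2 * exp (- z * (x + \<theta> * y)) \<le> 4 / (x + \<theta> * y)\<^sup>2" using exp_bound[OF elim c] .
      hence "\<theta> * (z\<^sup>2 * exp (- z * (x + \<theta> * y))) \<le> \<theta> * (4 / (x + \<theta> * y)\<^sup>2)"
        using th by (intro mult_left_mono) auto
      thus ?case using th by (simp add: abs_mult mult.commute mult.left_commute)
    qed
    show "(\<lambda>z. z\<^sup>2 * \<theta> * exp (- z * (x + \<theta> * y))) \<in> borel_measurable F"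
      unfolding measurable_cong_sets[OF sF refl] by measurable
  qed
qed

lemma dens_meas:
  fixes F :: "real measure" assumes "prob_space F" and sF: "sets F = sets borel"
  shows "(\<lambda>xy. frailty_density \<theta> F (fst xy) (snd xy)) \<in> borel_measurable (lborel :: (real\<times>real) measure)"
proof -
  interpret prob_space F by fact
  show ?thesis unfolding frailty_density_def
    by (rule borel_measurable_lebesgue_integral[where f="\<lambda>xy z. z\<^sup>2 * \<theta> * exp (- z * (fst xy + \<theta> * snd xy))"])
       (use meas_g(1)[OF sF, of \<theta>] in simp)
qed

lemma dens_nonneg: "0 \<le> frailty_density \<theta> F x y" if "\<theta> > 0"
  unfolding frailty_density_def using that by (intro Bochner_Integration.integral_nonneg) auto

lemma dens_norm:
  fixes F :: "real measure" assumes PF: "prob_space F" and sF: "sets F = sets borel" and F0: "emeasure F {..0} = 0"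
    and th: "\<theta> > 0"
  shows "(\<integral>\<^sup>+xy. indicator ({0<..} \<times> {0<..}) xy * ennreal (frailty_density \<theta> F (fst xy) (snd xy)) \<partial>(lborel :: (real\<times>real) measure)) = 1"
proof -
  interpret prob_space F by fact
  interpret P: pair_sigma_finite "lborel :: (real\<times>real) measure" F ..
  have "(\<integral>\<^sup>+xy. indicator ({0<..} \<times> {0<..}) xy * ennreal (frailty_density \<theta> F (fst xy) (snd xy)) \<partial>(lborel :: (real\<times>real) measure))
     = (\<integral>\<^sup>+xy. \<integral>\<^sup>+z. indicator ({0<..} \<times> {0<..}) xy * ennreal (z\<^sup>2 * \<theta> * exp (- z * (fst xy + \<theta> * snd xy))) \<partial>F \<partial>lborel)"
  proof (rule nn_integral_cong)
    fix xy :: "real \<times> real"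
    show "indicator ({0<..} \<times> {0<..}) xy * ennreal (frailty_density \<theta> F (fst xy) (snd xy)) =
      (\<integral>\<^sup>+z. indicator ({0<..} \<times> {0<..}) xy * ennreal (z\<^sup>2 * \<theta> * exp (- z * (fst xy + \<theta> * snd xy))) \<partial>F)"
    proof (cases "xy \<in> {0<..} \<times> {0<..}")
      case True
      have "ennreal (frailty_density \<theta> F (fst xy) (snd xy)) = (\<integral>\<^sup>+z. ennreal (z\<^sup>2 * \<theta> * exp (- z * (fst xy + \<theta> * snd xy))) \<partial>F)"
        unfolding frailty_density_def
        by (rule nn_integral_eq_integral[symmetric]) (use True integrable_g[OF PF sF F0 th] th in auto)
      thus ?thesis using True by simp
    qed simp
  qed
  also have "\<dots> = (\<integral>\<^sup>+z. \<integral>\<^sup>+xy. indicator ({0<..} \<times> {0<..}) xy * ennreal (z\<^sup>2 * \<theta> * exp (- z * (fst xy + \<theta> * snd xy))) \<partial>lborel \<partial>F)"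
    by (rule P.Fubini'[symmetric]) (use meas_g(2)[OF sF, of \<theta>] in simp)
  also have "\<dots> = (\<integral>\<^sup>+z. 1 \<partial>F)"
    apply (rule nn_integral_cong_AE)
    using AE_pos[OF sF F0] by eventually_elim (use exp2d th in auto)
  also have "\<dots> = 1" by (simp add: emeasure_space_1)
  finally show ?thesis .
qed

definition ca :: "real \<Rightarrow> real \<Rightarrow> real" where
  "ca \<theta> \<theta>\<^sub>0 = (if \<theta>\<^sub>0 \<le> \<theta> then (2*\<theta>-\<theta>\<^sub>0)/\<theta>\<^sub>0 else (\<theta>\<^sub>0-2*\<theta>)/\<theta>\<^sub>0)"
definition cb :: "real \<Rightarrow> real \<Rightarrow> real" where
  "cb \<theta> \<theta>\<^sub>0 = (if \<theta>\<^sub>0 \<le> \<theta> then -1 else 1)"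

lemma cab: "\<theta>\<^sub>0 > 0 \<Longrightarrow> ca \<theta> \<theta>\<^sub>0 + cb \<theta> \<theta>\<^sub>0 = 2 * \<bar>\<theta> - \<theta>\<^sub>0\<bar> / \<theta>\<^sub>0"
  by (auto simp: ca_def cb_def field_simps)

lemma pw0:
  fixes w E E0 \<theta> \<theta>\<^sub>0 :: real
  assumes w: "w \<ge> 0" and E: "E > 0" "E0 > 0" and th: "\<theta> > 0" and th0: "\<theta>\<^sub>0 > 0"
    and mono: "\<theta>\<^sub>0 \<le> \<theta> \<Longrightarrow> E \<le> E0" "\<theta> \<le> \<theta>\<^sub>0 \<Longrightarrow> E0 \<le> E"
  shows "\<bar>w * \<theta> * E - w * \<theta>\<^sub>0 * E0\<bar> \<le> ca \<theta> \<theta>\<^sub>0 * (w * \<theta>\<^sub>0 * E0) + cb \<theta> \<theta>\<^sub>0 * (w * \<theta> * E)"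
proof (cases "\<theta>\<^sub>0 \<le> \<theta>")
  case True
  hence "E \<le> E0" using mono by simp
  hence 1: "0 \<le> 2 * \<theta> * w * (E0 - E)" using w th by simp
  have 2: "0 \<le> 2 * (\<theta> - \<theta>\<^sub>0) * w * E0" using w True E by simp
  have e: "ca \<theta> \<theta>\<^sub>0 * (w * \<theta>\<^sub>0 * E0) + cb \<theta> \<theta>\<^sub>0 * (w * \<theta> * E) = (2*\<theta>-\<theta>\<^sub>0) * w * E0 - \<theta> * w * E"
    using True th0 by (simp add: ca_def cb_def field_simps)
  show ?thesis unfolding e abs_le_iff using 1 2 by (simp add: algebra_simps)
next
  case False
  hence "E0 \<le> E" using mono by simp
  hence 1: "0 \<le> 2 * \<theta> * w * (E - E0)" using w th by simp
  have 2: "0 \<le> 2 * (\<theta>\<^sub>0 - \<theta>) * w * E0" using w False E by simp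
  have e: "ca \<theta> \<theta>\<^sub>0 * (w * \<theta>\<^sub>0 * E0) + cb \<theta> \<theta>\<^sub>0 * (w * \<theta> * E) = (\<theta>\<^sub>0-2*\<theta>) * w * E0 + \<theta> * w * E"
    using False th0 by (simp add: ca_def cb_def field_simps)
  show ?thesis unfolding e abs_le_iff using 1 2 by (simp add: algebra_simps)
qed

lemma pw:
  fixes z x y \<theta> \<theta>\<^sub>0 :: real
  assumes z: "z > 0" and y: "y > 0" and th: "\<theta> > 0" and th0: "\<theta>\<^sub>0 > 0"
  shows "\<bar>z\<^sup>2 * \<theta> * exp (- z * (x + \<theta> * y)) - z\<^sup>2 * \<theta>\<^sub>0 * exp (- z * (x + \<theta>\<^sub>0 * y))\<bar>
     \<le> ca \<theta> \<theta>\<^sub>0 * (z\<^sup>2 * \<theta>\<^sub>0 * exp (- z * (x + \<theta>\<^sub>0 * y))) + cb \<theta> \<theta>\<^sub>0 * (z\<^sup>2 * \<theta> * exp (- z * (x + \<theta> * y)))"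
  by (rule pw0) (use z y th th0 in \<open>auto simp: mult_left_mono mult_right_mono\<close>)

lemma pw_dens:
  fixes F :: "real measure" assumes PF: "prob_space F" and sF: "sets F = sets borel" and F0: "emeasure F {..0} = 0"
    and th: "\<theta> > 0" and th0: "\<theta>\<^sub>0 > 0" and x: "x > 0" and y: "y > 0"
  shows "\<bar>frailty_density \<theta> F x y - frailty_density \<theta>\<^sub>0 F x y\<bar>
    \<le> ca \<theta> \<theta>\<^sub>0 * frailty_density \<theta>\<^sub>0 F x y + cb \<theta> \<theta>\<^sub>0 * frailty_density \<theta> F x y"
proof -
  define g where "g = (\<lambda>z::real. z\<^sup>2 * \<theta> * exp (- z * (x + \<theta> * y)))"
  define g0 where "g0 = (\<lambda>z::real. z\<^sup>2 * \<theta>\<^sub>0 * exp (- z * (x + \<theta>\<^sub>0 * y)))"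
  have ig: "integrable F g" unfolding g_def using integrable_g[OF PF sF F0 th x y] .
  have ig0: "integrable F g0" unfolding g0_def using integrable_g[OF PF sF F0 th0 x y] .
  have "frailty_density \<theta> F x y - frailty_density \<theta>\<^sub>0 F x y = (\<integral>z. g z - g0 z \<partial>F)"
    unfolding frailty_density_def g_def[symmetric] g0_def[symmetric]
    using ig ig0 by simp
  hence "\<bar>frailty_density \<theta> F x y - frailty_density \<theta>\<^sub>0 F x y\<bar> \<le> (\<integral>z. \<bar>g z - g0 z\<bar> \<partial>F)"
    by simp
  also have "\<dots> \<le> (\<integral>z. ca \<theta> \<theta>\<^sub>0 * g0 z + cb \<theta> \<theta>\<^sub>0 * g z \<partial>F)"
  proof (rule integral_mono_AE)
    show "integrable F (\<lambda>z. \<bar>g z - g0 z\<bar>)" using ig ig0 by auto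
    show "integrable F (\<lambda>z. ca \<theta> \<theta>\<^sub>0 * g0 z + cb \<theta> \<theta>\<^sub>0 * g z)" using ig ig0 by auto
    show "AE z in F. \<bar>g z - g0 z\<bar> \<le> ca \<theta> \<theta>\<^sub>0 * g0 z + cb \<theta> \<theta>\<^sub>0 * g z"
      using AE_pos[OF sF F0] by eventually_elim (use pw y th th0 in \<open>auto simp: g_def g0_def\<close>)
  qed
  also have "\<dots> = ca \<theta> \<theta>\<^sub>0 * frailty_density \<theta>\<^sub>0 F x y + cb \<theta> \<theta>\<^sub>0 * frailty_density \<theta> F x y"
    unfolding frailty_density_def g_def[symmetric] g0_def[symmetric]
    using ig ig0 by simp
  finally show ?thesis .
qed

lemma dens_int:
  fixes F :: "real measure" assumes PF: "prob_space F" and sF: "sets F = sets borel" and F0: "emeasure F {..0} = 0"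
    and th: "\<theta> > 0"
  shows "integrable lborel (\<lambda>xy::real\<times>real. indicator ({0<..} \<times> {0<..}) xy * frailty_density \<theta> F (fst xy) (snd xy))"
    and "(\<integral>xy. indicator ({0<..} \<times> {0<..}) xy * frailty_density \<theta> F (fst xy) (snd xy) \<partial>lborel) = 1"
proof -
  have m: "(\<lambda>xy::real\<times>real. indicator ({0<..} \<times> {0<..}) xy * frailty_density \<theta> F (fst xy) (snd xy)) \<in> borel_measurable lborel"
  proof (intro borel_measurable_times borel_measurable_indicator dens_meas[OF PF sF])
    show "{0<..} \<times> {0<..} \<in> sets (lborel :: (real\<times>real) measure)"
      by (simp add: borel_open open_Times)
  qed
  have "(\<integral>\<^sup>+xy. ennreal (indicator ({0<..} \<times> {0<..}) xy * frailty_density \<theta> F (fst xy) (snd xy)) \<partial>(lborel::(real\<times>real) measure)) = ennreal 1"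
    unfolding dens_norm[OF PF sF F0 th, symmetric] ennreal_1
    by (intro nn_integral_cong) (simp add: indicator_def)
  hence "integrable lborel (\<lambda>xy::real\<times>real. indicator ({0<..} \<times> {0<..}) xy * frailty_density \<theta> F (fst xy) (snd xy))
     \<and> (\<integral>xy. indicator ({0<..} \<times> {0<..}) xy * frailty_density \<theta> F (fst xy) (snd xy) \<partial>lborel) = 1"
    by (subst (asm) nn_integral_eq_integrable) (use m dens_nonneg th in auto)
  thus "integrable lborel (\<lambda>xy::real\<times>real. indicator ({0<..} \<times> {0<..}) xy * frailty_density \<theta> F (fst xy) (snd xy))"
    and "(\<integral>xy. indicator ({0<..} \<times> {0<..}) xy * frailty_density \<theta> F (fst xy) (snd xy) \<partial>lborel) = 1" by auto
qed

theorem mainTheorem2: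
  fixes \<theta> \<theta>\<^sub>0 :: real and F :: "real measure"
  assumes "\<theta> > 0" and "\<theta>\<^sub>0 > 0"
    and "prob_space F" and "sets F = sets borel"
    and "emeasure F {..0} = 0"
  shows "L1_dist_quadrant (frailty_density \<theta> F) (frailty_density \<theta>\<^sub>0 F)
           \<le> ennreal (2 * \<bar>\<theta> - \<theta>\<^sub>0\<bar> / \<theta>\<^sub>0)"
proof -
  note th = assms(1) and th0 = assms(2) and PF = assms(3) and sF = assms(4) and F0 = assms(5)
  let ?Q = "{0<..} \<times> {0<..} :: (real \<times> real) set"
  let ?p = "\<lambda>xy::real\<times>real. indicator ?Q xy * frailty_density \<theta> F (fst xy) (snd xy)"
  let ?q = "\<lambda>xy::real\<times>real. indicator ?Q xy * frailty_density \<theta>\<^sub>0 F (fst xy) (snd xy)"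
  define h where "h = (\<lambda>xy. ca \<theta> \<theta>\<^sub>0 * ?q xy + cb \<theta> \<theta>\<^sub>0 * ?p xy)"
  have ih: "integrable lborel h" unfolding h_def
    using dens_int(1)[OF PF sF F0 th] dens_int(1)[OF PF sF F0 th0] by auto
  have Ih: "integral\<^sup>L lborel h = 2 * \<bar>\<theta> - \<theta>\<^sub>0\<bar> / \<theta>\<^sub>0" unfolding h_def
    using dens_int[OF PF sF F0 th] dens_int[OF PF sF F0 th0] cab[OF th0] by simp
  have le: "indicator ?Q xy * ennreal \<bar>frailty_density \<theta> F (fst xy) (snd xy) - frailty_density \<theta>\<^sub>0 F (fst xy) (snd xy)\<bar>
     \<le> ennreal (h xy)" for xy
  proof (cases "xy \<in> ?Q")
    case True
    then show ?thesis unfolding h_def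
      using pw_dens[OF PF sF F0 th th0, of "fst xy" "snd xy"]
      by (auto intro!: ennreal_leI simp: algebra_simps)
  qed simp
  have hnn: "0 \<le> h xy" for xy
  proof (cases "xy \<in> ?Q")
    case True
    then show ?thesis unfolding h_def
      using pw_dens[OF PF sF F0 th th0, of "fst xy" "snd xy"]
      by (auto simp: algebra_simps)
  qed (simp add: h_def)
  have "L1_dist_quadrant (frailty_density \<theta> F) (frailty_density \<theta>\<^sub>0 F) \<le> (\<integral>\<^sup>+xy. ennreal (h xy) \<partial>lborel)"
    unfolding L1_dist_quadrant_def by (rule nn_integral_mono) (rule le)
  also have "\<dots> = ennreal (integral\<^sup>L lborel h)"
    by (rule nn_integral_eq_integral) (use ih hnn in auto)
  finally show ?thesis unfolding Ih .
qed

end
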